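(* Let $A,B\subseteq\omega$ with $B$ infinite. If $A$ is c.e. relative to every infinite subset of $B$, then there is an infinite $C\subseteq B$ and a single relative c.e. operator $\Theta$ with $\Theta(S)=A$ for every infinite $S\subseteq C$.
   Context: A relative c.e. operator is a c.e. set $\Theta$ of pairs $(\sigma,x)\in 2^{<\omega}\times\omega$, with $\Theta(X)$ the set of $x$ such that $(\sigma,x)\in\Theta$ for some initial segment $\sigma$ of the characteristic function of $X$. *)

theory Defs
  imports Main "HOL-Library.Nat_Bijection"
begin

text \<open>Primitive recursive functions on natural-number argument lists
 (arity-free: missing arguments read as 0, extra arguments are ignored;
 this computes exactly the primitive recursive functions).\<close>

datatype prfun = Zero | Succ | Proj nat | Comp prfun "prfun list" | Prec prfun prfun

fun pr_eval :: "prfun \<Rightarrow> nat list \<Rightarrow> nat" where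
  "pr_eval Zero xs = 0"
| "pr_eval Succ xs = Suc (case xs of [] \<Rightarrow> 0 | x # _ \<Rightarrow> x)"
| "pr_eval (Proj i) xs = (if i < length xs then xs ! i else 0)"
| "pr_eval (Comp f gs) xs = pr_eval f (map (\<lambda>g. pr_eval g xs) gs)"
| "pr_eval (Prec f g) xs =
     (case xs of [] \<Rightarrow> pr_eval f []
      | (n # ys) \<Rightarrow> rec_nat (pr_eval f ys) (\<lambda>k r. pr_eval g (k # r # ys)) n)"

definition ce :: "nat set \<Rightarrow> bool" where
  "ce S \<longleftrightarrow> (\<exists>f. S = {x. \<exists>y. pr_eval f [x, y] = 0})"

definition code_pair :: "bool list \<Rightarrow> nat \<Rightarrow> nat" where
  "code_pair \<sigma> x = prod_encode (list_encode (map of_bool \<sigma>), x)"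

definition ce_operator :: "(bool list \<times> nat) set \<Rightarrow> bool" where
  "ce_operator \<Theta> \<longleftrightarrow> ce {code_pair \<sigma> x | \<sigma> x. (\<sigma>, x) \<in> \<Theta>}"

definition init_seg :: "bool list \<Rightarrow> nat set \<Rightarrow> bool" where
  "init_seg \<sigma> X \<longleftrightarrow> \<sigma> = map (\<lambda>i. i \<in> X) [0..<length \<sigma>]"

definition op_apply :: "(bool list \<times> nat) set \<Rightarrow> nat set \<Rightarrow> nat set" where
  "op_apply \<Theta> X = {x. \<exists>\<sigma>. (\<sigma>, x) \<in> \<Theta> \<and> init_seg \<sigma> X}"

definition ce_in :: "nat set \<Rightarrow> nat set \<Rightarrow> bool" where
  "ce_in A X \<longleftrightarrow> (\<exists>\<Theta>. ce_operator \<Theta> \<and> op_apply \<Theta> X = A)"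

end

theory Submission
  imports Defs "HOL-Library.Countable"
begin

instance prfun :: countable by countable_datatype

definition prfn :: "nat \<Rightarrow> (nat list \<Rightarrow> nat) \<Rightarrow> bool" where
  "prfn n F \<longleftrightarrow> (\<exists>p. \<forall>xs. length xs = n \<longrightarrow> pr_eval p xs = F xs)"

lemma prfn_cong: "prfn n a \<Longrightarrow> (\<And>xs. length xs = n \<Longrightarrow> a xs = b xs) \<Longrightarrow> prfn n b"
  unfolding prfn_def by metis

lemma prfn_const: "prfn n (\<lambda>xs. c)"
proof (induction c)
  case 0
  then show ?case unfolding prfn_def by (rule exI[of _ Zero]) simp
next
  case (Suc c)
  then obtain p where "\<forall>xs. length xs = n \<longrightarrow> pr_eval p xs = c" unfolding prfn_def by blast
  then show ?case unfolding prfn_def by (intro exI[of _ "Comp Succ [p]"]) simp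
qed

lemma prfn_proj: "i < n \<Longrightarrow> prfn n (\<lambda>xs. xs ! i)"
  unfolding prfn_def by (rule exI[of _ "Proj i"]) simp

lemma progs_exist:
  assumes "\<forall>h\<in>set hs. prfn n h"
  shows "\<exists>ps. \<forall>xs. length xs = n \<longrightarrow> map (\<lambda>p. pr_eval p xs) ps = map (\<lambda>h. h xs) hs"
  using assms
proof (induction hs)
  case Nil
  then show ?case by (intro exI[of _ "[]"]) simp
next
  case (Cons h hs)
  then obtain ps where ps: "\<forall>xs. length xs = n \<longrightarrow> map (\<lambda>p. pr_eval p xs) ps = map (\<lambda>h. h xs) hs"
    by auto
  from Cons.prems obtain p where p: "\<forall>xs. length xs = n \<longrightarrow> pr_eval p xs = h xs"
    unfolding prfn_def by auto
  show ?case using ps p by (intro exI[of _ "p # ps"]) simp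
qed

lemma prfn_comp:
  assumes "prfn m g" "length hs = m" "\<forall>h\<in>set hs. prfn n h"
  shows "prfn n (\<lambda>xs. g (map (\<lambda>h. h xs) hs))"
proof -
  obtain pg where pg: "\<forall>xs. length xs = m \<longrightarrow> pr_eval pg xs = g xs" using assms(1) unfolding prfn_def by auto
  obtain ps where ps: "\<forall>xs. length xs = n \<longrightarrow> map (\<lambda>p. pr_eval p xs) ps = map (\<lambda>h. h xs) hs"
    using progs_exist[OF assms(3)] by auto
  show ?thesis unfolding prfn_def
    using pg ps assms(2) by (intro exI[of _ "Comp pg ps"]) simp
qed

lemma prfn_Suc: "prfn n a \<Longrightarrow> prfn n (\<lambda>xs. Suc (a xs))"
proof -
  assume "prfn n a"
  then obtain p where "\<forall>xs. length xs = n \<longrightarrow> pr_eval p xs = a xs" unfolding prfn_def by blast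
  then show ?thesis unfolding prfn_def by (intro exI[of _ "Comp Succ [p]"]) simp
qed

lemma prfn_eval: "prfn n a \<Longrightarrow> prfn n b \<Longrightarrow> prfn n (\<lambda>xs. pr_eval p [a xs, b xs])"
  using prfn_comp[of 2 "\<lambda>ys. pr_eval p ys" "[a,b]" n]
  unfolding prfn_def by auto

lemma map_proj: "length xs = n \<Longrightarrow> map (\<lambda>i. pr_eval (Proj i) xs) [0..<n] = xs"
  by (simp add: list_eq_iff_nth_eq nth_Cons del: upt_Suc split: nat.split)

lemma prfn_rec:
  assumes "prfn n a" "prfn n f" "prfn (Suc (Suc n)) g"
  shows "prfn n (\<lambda>xs. rec_nat (f xs) (\<lambda>k r. g (k # r # xs)) (a xs))"
proof -
  obtain pa where pa: "\<forall>xs. length xs = n \<longrightarrow> pr_eval pa xs = a xs" using assms(1) unfolding prfn_def by auto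
  obtain pf where pf: "\<forall>xs. length xs = n \<longrightarrow> pr_eval pf xs = f xs" using assms(2) unfolding prfn_def by auto
  obtain pg where pg: "\<forall>xs. length xs = Suc (Suc n) \<longrightarrow> pr_eval pg xs = g xs" using assms(3) unfolding prfn_def by auto
  have "pr_eval (Comp (Prec pf pg) (pa # map Proj [0..<n])) xs = rec_nat (f xs) (\<lambda>k r. g (k # r # xs)) (a xs)"
    if "length xs = n" for xs
  proof -
    have m: "map (\<lambda>g. pr_eval g xs) (map Proj [0..<n]) = xs" using map_proj[OF that] by (simp add: comp_def)
    have "(\<lambda>k r. pr_eval pg (k # r # xs)) = (\<lambda>k r. g (k # r # xs))" using pg that by (intro ext) simp
    then show ?thesis using m pa pf that by simp
  qed
  then show ?thesis unfolding prfn_def by blast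
qed

lemma prfn_projs: "\<forall>i\<in>set is. i < n \<Longrightarrow> \<forall>h\<in>set (map (\<lambda>i ys. ys ! i) is). prfn n h"
  by (auto intro: prfn_proj)

lemma prfn_lift: "prfn n b \<Longrightarrow> prfn (Suc (Suc n)) (\<lambda>ys. b (drop 2 ys))"
proof -
  assume b: "prfn n b"
  have A: "prfn (Suc (Suc n)) (\<lambda>ys. b (map (\<lambda>h. h ys) (map (\<lambda>i ys. ys ! i) [2..<n+2])))"
    by (rule prfn_comp[OF b]) (auto intro: prfn_proj)
  have B: "length ys = Suc (Suc n) \<Longrightarrow> map (\<lambda>h. h ys) (map (\<lambda>i ys. ys ! i) [2..<n+2]) = drop 2 ys" for ys
    by (simp add: list_eq_iff_nth_eq nth_Cons del: upt_Suc split: nat.split)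
  show ?thesis by (rule prfn_cong[OF A]) (metis B)
qed

lemma prfn_sub1: "prfn (Suc n) b \<Longrightarrow> prfn (Suc (Suc n)) (\<lambda>ys. b (ys ! 0 # drop 2 ys))"
proof -
  assume b: "prfn (Suc n) b"
  have A: "prfn (Suc (Suc n)) (\<lambda>ys. b (map (\<lambda>h. h ys) (map (\<lambda>i ys. ys ! i) (0 # [2..<n+2]))))"
    by (rule prfn_comp[OF b]) (auto intro: prfn_proj)
  have B: "length ys = Suc (Suc n) \<Longrightarrow> map (\<lambda>h. h ys) (map (\<lambda>i ys. ys ! i) (0 # [2..<n+2])) = ys ! 0 # drop 2 ys" for ys
    by (simp add: list_eq_iff_nth_eq nth_Cons del: upt_Suc split: nat.split)
  show ?thesis by (rule prfn_cong[OF A]) (metis B)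
qed


lemma rec_add: "rec_nat b (\<lambda>k r. Suc r) a = a + (b::nat)" by (induction a) auto
lemma rec_pred: "rec_nat 0 (\<lambda>k r. k) a = a - (1::nat)" by (induction a) auto
lemma rec_sub: "rec_nat a (\<lambda>k r. r - Suc 0) b = a - (b::nat)" by (induction b) auto
lemma rec_mult: "rec_nat 0 (\<lambda>k r. r + c) a = a * (c::nat)" by (induction a) auto
lemma rec_tri: "rec_nat 0 (\<lambda>k r. Suc (r + k)) a = triangle a" by (induction a) auto
lemma rec_ball: "rec_nat (Suc 0) (\<lambda>k r. r * of_bool (P k)) a = (of_bool (\<forall>k<a. P k) :: nat)"
  by (induction a) (auto simp: less_Suc_eq)

lemma prfn_add: "prfn n a \<Longrightarrow> prfn n b \<Longrightarrow> prfn n (\<lambda>xs. a xs + b xs)"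
proof -
  assume a: "prfn n a" and b: "prfn n b"
  have "prfn n (\<lambda>xs. rec_nat (b xs) (\<lambda>k r. (\<lambda>ys. Suc (ys ! 1)) (k # r # xs)) (a xs))"
    by (rule prfn_rec[OF a b], (intro prfn_Suc prfn_proj)+, simp_all)
  then show ?thesis by (rule prfn_cong) (simp add: rec_add)
qed

lemma prfn_pred: "prfn n a \<Longrightarrow> prfn n (\<lambda>xs. a xs - 1)"
proof -
  assume a: "prfn n a"
  have "prfn n (\<lambda>xs. rec_nat ((\<lambda>_. 0) xs) (\<lambda>k r. (\<lambda>ys. ys ! 0) (k # r # xs)) (a xs))"
    by (rule prfn_rec[OF a]) (auto intro: prfn_const prfn_proj)
  then show ?thesis by (rule prfn_cong) (simp add: rec_pred)
qed

lemma prfn_sub: "prfn n a \<Longrightarrow> prfn n b \<Longrightarrow> prfn n (\<lambda>xs. a xs - b xs)"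
proof -
  assume a: "prfn n a" and b: "prfn n b"
  have "prfn n (\<lambda>xs. rec_nat (a xs) (\<lambda>k r. (\<lambda>ys. ys ! 1 - 1) (k # r # xs)) (b xs))"
    by (rule prfn_rec[OF b a], (intro prfn_pred prfn_proj)+, simp_all)
  then show ?thesis by (rule prfn_cong) (simp add: rec_sub)
qed

lemma prfn_mult: "prfn n a \<Longrightarrow> prfn n b \<Longrightarrow> prfn n (\<lambda>xs. a xs * b xs)"
proof -
  assume a: "prfn n a" and b: "prfn n b"
  have "prfn n (\<lambda>xs. rec_nat ((\<lambda>_. 0) xs) (\<lambda>k r. (\<lambda>ys. ys ! 1 + b (drop 2 ys)) (k # r # xs)) (a xs))"
    by (rule prfn_rec[OF a], (intro prfn_const prfn_add prfn_proj prfn_lift[OF b])+, simp_all)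
  then show ?thesis by (rule prfn_cong) (simp add: rec_mult)
qed

lemma prfn_tri: "prfn n a \<Longrightarrow> prfn n (\<lambda>xs. triangle (a xs))"
proof -
  assume a: "prfn n a"
  have "prfn n (\<lambda>xs. rec_nat ((\<lambda>_. 0) xs) (\<lambda>k r. (\<lambda>ys. ys ! 1 + Suc (ys ! 0)) (k # r # xs)) (a xs))"
    by (rule prfn_rec[OF a], (intro prfn_const prfn_add prfn_proj prfn_Suc)+, simp_all)
  then show ?thesis by (rule prfn_cong) (simp add: rec_tri)
qed

lemma prfn_eq: "prfn n a \<Longrightarrow> prfn n b \<Longrightarrow> prfn n (\<lambda>xs. of_bool (a xs = b xs))"
proof -
  assume a: "prfn n a" and b: "prfn n b"
  have "prfn n (\<lambda>xs. 1 - ((a xs - b xs) + (b xs - a xs)))"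
    by (intro prfn_sub prfn_add prfn_const a b)
  then show ?thesis by (rule prfn_cong) auto
qed

lemma prfn_le: "prfn n a \<Longrightarrow> prfn n b \<Longrightarrow> prfn n (\<lambda>xs. of_bool (a xs \<le> b xs))"
proof -
  assume a: "prfn n a" and b: "prfn n b"
  have "prfn n (\<lambda>xs. 1 - (a xs - b xs))"
    by (intro prfn_sub prfn_add prfn_const a b)
  then show ?thesis by (rule prfn_cong) auto
qed

lemma prfn_less: "prfn n a \<Longrightarrow> prfn n b \<Longrightarrow> prfn n (\<lambda>xs. of_bool (a xs < b xs))"
proof -
  assume a: "prfn n a" and b: "prfn n b"
  have "prfn n (\<lambda>xs. of_bool (Suc (a xs) \<le> b xs))"
    by (intro prfn_le prfn_Suc a b)
  then show ?thesis by (rule prfn_cong) auto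
qed

lemma prfn_and: "prfn n (\<lambda>xs. of_bool (P xs)) \<Longrightarrow> prfn n (\<lambda>xs. of_bool (Q xs)) \<Longrightarrow> prfn n (\<lambda>xs. of_bool (P xs \<and> Q xs))"
  by (drule (1) prfn_mult, erule prfn_cong) simp

lemma prfn_not: "prfn n (\<lambda>xs. of_bool (P xs)) \<Longrightarrow> prfn n (\<lambda>xs. of_bool (\<not> P xs))"
  by (drule prfn_sub[OF prfn_const[of n 1]], erule prfn_cong) simp

lemma prfn_or: "prfn n (\<lambda>xs. of_bool (P xs)) \<Longrightarrow> prfn n (\<lambda>xs. of_bool (Q xs)) \<Longrightarrow> prfn n (\<lambda>xs. of_bool (P xs \<or> Q xs))"
proof -
  assume "prfn n (\<lambda>xs. of_bool (P xs))" "prfn n (\<lambda>xs. of_bool (Q xs))"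
  then have "prfn n (\<lambda>xs. of_bool (\<not> (\<not> P xs \<and> \<not> Q xs)))" by (intro prfn_not prfn_and)
  then show ?thesis by simp
qed

lemma prfn_imp: "prfn n (\<lambda>xs. of_bool (P xs)) \<Longrightarrow> prfn n (\<lambda>xs. of_bool (Q xs)) \<Longrightarrow> prfn n (\<lambda>xs. of_bool (P xs \<longrightarrow> Q xs))"
proof -
  assume "prfn n (\<lambda>xs. of_bool (P xs))" "prfn n (\<lambda>xs. of_bool (Q xs))"
  then have "prfn n (\<lambda>xs. of_bool (\<not> P xs \<or> Q xs))" by (intro prfn_not prfn_or)
  then show ?thesis by simp
qed

lemma prfn_if: "prfn n (\<lambda>xs. of_bool (P xs)) \<Longrightarrow> prfn n a \<Longrightarrow> prfn n b \<Longrightarrow> prfn n (\<lambda>xs. if P xs then a xs else b xs)"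
proof -
  assume p: "prfn n (\<lambda>xs. of_bool (P xs))" and a: "prfn n a" and b: "prfn n b"
  have "prfn n (\<lambda>xs. of_bool (P xs) * a xs + (1 - of_bool (P xs)) * b xs)"
    by (intro prfn_const prfn_add prfn_mult prfn_sub prfn_const p a b)
  then show ?thesis by (rule prfn_cong) auto
qed

lemma prfn_ball: "prfn (Suc n) (\<lambda>ys. of_bool (P ys)) \<Longrightarrow> prfn n a \<Longrightarrow> prfn n (\<lambda>xs. of_bool (\<forall>k<a xs. P (k # xs)))"
proof -
  assume p: "prfn (Suc n) (\<lambda>ys. of_bool (P ys))" and a: "prfn n a"
  have "prfn n (\<lambda>xs. rec_nat ((\<lambda>_. 1) xs) (\<lambda>k r. (\<lambda>ys. ys ! 1 * of_bool (P (ys ! 0 # drop 2 ys))) (k # r # xs)) (a xs))"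
    by (rule prfn_rec[OF a], (intro prfn_const prfn_mult prfn_proj prfn_sub1[OF p])+, simp_all)
  then show ?thesis by (rule prfn_cong) (simp add: rec_ball)
qed

lemma prfn_mem: "finite F \<Longrightarrow> prfn n a \<Longrightarrow> prfn n (\<lambda>xs. of_bool (a xs \<in> F))"
proof (induction F rule: finite_induct)
  case empty
  then show ?case by (simp add: prfn_const)
next
  case (insert x F)
  then have "prfn n (\<lambda>xs. of_bool (a xs = x \<or> a xs \<in> F))" by (intro prfn_or prfn_eq prfn_const) auto
  then show ?case by simp
qed

definition Sfun :: "nat \<Rightarrow> nat" where
  "Sfun c = rec_nat 0 (\<lambda>k r. if triangle (Suc r) \<le> Suc k then Suc r else r) c"

lemma Sfun_inv: "triangle (Sfun c) \<le> c \<and> c < triangle (Suc (Sfun c))"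
proof (induction c)
  case 0
  then show ?case by (simp add: Sfun_def)
next
  case (Suc c)
  have e: "Sfun (Suc c) = (if triangle (Suc (Sfun c)) \<le> Suc c then Suc (Sfun c) else Sfun c)"
    by (simp add: Sfun_def)
  show ?case using Suc by (simp only: e) auto
qed

definition dfst :: "nat \<Rightarrow> nat" where "dfst c = c - triangle (Sfun c)"
definition dsnd :: "nat \<Rightarrow> nat" where "dsnd c = Sfun c - dfst c"

lemma prod_decode_alt: "prod_decode c = (dfst c, dsnd c)"
proof -
  have i: "triangle (Sfun c) \<le> c" "c < triangle (Sfun c) + Suc (Sfun c)" using Sfun_inv[of c] by auto
  have "prod_encode (dfst c, dsnd c) = c"
    using i by (simp add: prod_encode_def dfst_def dsnd_def)
  then show ?thesis by (metis prod_encode_inverse)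
qed

lemma dfst_eq: "dfst c = fst (prod_decode c)" and dsnd_eq: "dsnd c = snd (prod_decode c)"
  by (simp_all add: prod_decode_alt)

lemma prfn_Sfun: "prfn n a \<Longrightarrow> prfn n (\<lambda>xs. Sfun (a xs))"
proof -
  assume a: "prfn n a"
  have "prfn n (\<lambda>xs. rec_nat ((\<lambda>_. 0) xs) (\<lambda>k r. (\<lambda>ys. if triangle (Suc (ys ! 1)) \<le> Suc (ys ! 0) then Suc (ys ! 1) else ys ! 1) (k # r # xs)) (a xs))"
    by (rule prfn_rec[OF a], (intro prfn_const prfn_if prfn_le prfn_tri prfn_Suc prfn_proj)+, simp_all)
  then show ?thesis by (rule prfn_cong) (simp add: Sfun_def cong: if_cong)
qed

lemma prfn_dfst: "prfn n a \<Longrightarrow> prfn n (\<lambda>xs. dfst (a xs))"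
  unfolding dfst_def by (intro prfn_sub prfn_tri prfn_Sfun)

lemma prfn_dsnd: "prfn n a \<Longrightarrow> prfn n (\<lambda>xs. dsnd (a xs))"
  unfolding dsnd_def by (intro prfn_sub prfn_Sfun prfn_dfst)

lemma prfn_penc: "prfn n a \<Longrightarrow> prfn n b \<Longrightarrow> prfn n (\<lambda>xs. prod_encode (a xs, b xs))"
  unfolding prod_encode_def by (simp, intro prfn_add prfn_tri)

definition chd :: "nat \<Rightarrow> nat" where "chd a = dfst (a - 1)"
definition ctl :: "nat \<Rightarrow> nat" where "ctl a = dsnd (a - 1)"
definition ctlpow :: "nat \<Rightarrow> nat \<Rightarrow> nat" where "ctlpow k a = rec_nat a (\<lambda>_ r. ctl r) k"

lemma prfn_chd: "prfn n a \<Longrightarrow> prfn n (\<lambda>xs. chd (a xs))"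
  unfolding chd_def by (intro prfn_dfst prfn_pred)

lemma prfn_ctl: "prfn n a \<Longrightarrow> prfn n (\<lambda>xs. ctl (a xs))"
  unfolding ctl_def by (intro prfn_dsnd prfn_pred)

lemma prfn_ctlpow: "prfn n k \<Longrightarrow> prfn n a \<Longrightarrow> prfn n (\<lambda>xs. ctlpow (k xs) (a xs))"
proof -
  assume k: "prfn n k" and a: "prfn n a"
  have "prfn n (\<lambda>xs. rec_nat (a xs) (\<lambda>k r. (\<lambda>ys. ctl (ys ! 1)) (k # r # xs)) (k xs))"
    by (rule prfn_rec[OF k a], (intro prfn_ctl prfn_proj)+, simp_all)
  then show ?thesis by (rule prfn_cong) (simp add: ctlpow_def)
qed

lemma pd0: "prod_decode 0 = (0, 0)"
  using prod_encode_inverse[of "(0,0)"] by (simp add: prod_encode_def)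

lemma ctl_enc: "ctl (list_encode xs) = list_encode (tl xs)"
  by (cases xs) (simp_all add: ctl_def dsnd_eq pd0)

lemma chd_enc: "xs \<noteq> [] \<Longrightarrow> chd (list_encode xs) = hd xs"
  by (cases xs) (simp_all add: chd_def dfst_eq)

lemma ctlpow_enc: "ctlpow k (list_encode xs) = list_encode (drop k xs)"
  by (induction k) (simp_all add: ctlpow_def ctl_enc drop_Suc tl_drop)

lemma length_le_enc: "length xs \<le> list_encode xs"
proof (induction xs)
  case (Cons x xs)
  then show ?case using le_prod_encode_2[of "list_encode xs" x] by simp
qed simp

lemma ce_intro: "prfn 2 (\<lambda>xs. of_bool (P (xs ! 0) (xs ! 1))) \<Longrightarrow> ce {x. \<exists>y. P x y}"
proof -
  assume "prfn 2 (\<lambda>xs. of_bool (P (xs ! 0) (xs ! 1)))"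
  then have "prfn 2 (\<lambda>xs. of_bool (\<not> P (xs ! 0) (xs ! 1)))" by (rule prfn_not)
  then obtain p where p: "\<forall>xs. length xs = 2 \<longrightarrow> pr_eval p xs = of_bool (\<not> P (xs ! 0) (xs ! 1))"
    unfolding prfn_def by blast
  have "{x. \<exists>y. P x y} = {x. \<exists>y. pr_eval p [x, y] = 0}" using p by auto
  then show ?thesis unfolding ce_def by blast
qed


lemma prfn_tl: "prfn n b \<Longrightarrow> prfn (Suc n) (\<lambda>ys. b (tl ys))"
proof -
  assume b: "prfn n b"
  have A: "prfn (Suc n) (\<lambda>ys. b (map (\<lambda>h. h ys) (map (\<lambda>i ys. ys ! i) [1..<n+1])))"
    by (rule prfn_comp[OF b]) (auto intro: prfn_proj)
  have B: "length ys = Suc n \<Longrightarrow> map (\<lambda>h. h ys) (map (\<lambda>i ys. ys ! i) [1..<n+1]) = tl ys" for ys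
    by (simp add: list_eq_iff_nth_eq nth_tl del: upt_Suc)
  show ?thesis by (rule prfn_cong[OF A]) (metis B)
qed

definition V :: "nat \<Rightarrow> bool" where
  "V a \<longleftrightarrow> (\<forall>k<a. ctlpow k a \<noteq> 0 \<longrightarrow> chd (ctlpow k a) \<le> 1)"

definition bad :: "nat set \<Rightarrow> nat \<Rightarrow> nat \<Rightarrow> nat \<Rightarrow> bool" where
  "bad F k a b \<longleftrightarrow> a \<noteq> 0 \<and> (b = 0 \<or> (chd a \<noteq> 0 \<and> k \<notin> F \<and> chd b = 0) \<or> (k \<in> F \<and> chd a = 0))"

definition CB :: "nat set \<Rightarrow> nat \<Rightarrow> nat \<Rightarrow> bool" where
  "CB F m l \<longleftrightarrow> (\<forall>k<m. \<not> bad F k (ctlpow k m) (ctlpow k l))"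

lemmas prfn_intros = prfn_and prfn_not prfn_or prfn_imp prfn_eq prfn_le prfn_less
  prfn_eval prfn_penc prfn_dfst prfn_dsnd prfn_chd prfn_ctl prfn_ctlpow prfn_proj prfn_const
  prfn_Suc prfn_add prfn_sub prfn_mult

lemma prfn_V: "prfn n a \<Longrightarrow> prfn n (\<lambda>xs. of_bool (V (a xs)))"
proof -
  assume a: "prfn n a"
  have "prfn (Suc n) (\<lambda>ys. of_bool (ctlpow (ys ! 0) (a (tl ys)) \<noteq> 0 \<longrightarrow> chd (ctlpow (ys ! 0) (a (tl ys))) \<le> 1))"
    by (rule prfn_intros prfn_tl[OF a] | simp)+
  from prfn_ball[OF this a] show ?thesis by (rule prfn_cong) (simp add: V_def)
qed

lemma prfn_CB: "finite F \<Longrightarrow> prfn n a \<Longrightarrow> prfn n b \<Longrightarrow> prfn n (\<lambda>xs. of_bool (CB F (a xs) (b xs)))"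
proof -
  assume F: "finite F" and a: "prfn n a" and b: "prfn n b"
  have "prfn (Suc n) (\<lambda>ys. of_bool (\<not> bad F (ys ! 0) (ctlpow (ys ! 0) (a (tl ys))) (ctlpow (ys ! 0) (b (tl ys)))))"
    unfolding bad_def by (rule prfn_intros prfn_mem[OF F] prfn_tl[OF a] prfn_tl[OF b] | simp)+
  from prfn_ball[OF this a] show ?thesis by (rule prfn_cong) (simp add: CB_def)
qed

lemma ctlpow_ne0: "ctlpow k (list_encode xs) \<noteq> 0 \<longleftrightarrow> k < length xs"
proof -
  have e: "list_encode ys = 0 \<longleftrightarrow> ys = []" for ys by (cases ys) auto
  show ?thesis by (simp add: ctlpow_enc e not_le)
qed

lemma ctlpow_gt0: "0 < ctlpow k (list_encode xs) \<longleftrightarrow> k < length xs"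
  using ctlpow_ne0[of k xs] by auto

lemma chd_ctlpow: "k < length xs \<Longrightarrow> chd (ctlpow k (list_encode xs)) = xs ! k"
  by (simp add: ctlpow_enc chd_enc hd_drop_conv_nth)

lemma V_iff: "V a \<longleftrightarrow> (\<exists>\<sigma>. a = list_encode (map of_bool \<sigma>))"
proof -
  define xs where "xs = list_decode a"
  have a: "a = list_encode xs" by (simp add: xs_def)
  have len: "length xs \<le> a" using length_le_enc a by simp
  have "V a \<longleftrightarrow> (\<forall>k<a. k < length xs \<longrightarrow> xs ! k \<le> 1)"
    unfolding V_def a by (simp add: ctlpow_ne0 ctlpow_gt0 chd_ctlpow)
  also have "\<dots> \<longleftrightarrow> (\<forall>k<length xs. xs ! k \<le> 1)"
    using len by auto
  also have "\<dots> \<longleftrightarrow> (\<exists>\<sigma>. xs = map of_bool \<sigma>)"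
  proof
    assume h: "\<forall>k<length xs. xs ! k \<le> 1"
    have "xs ! k = of_bool (xs ! k \<noteq> 0)" if "k < length xs" for k
      using h that by (cases "xs ! k") auto
    then have "xs = map of_bool (map (\<lambda>n. n \<noteq> 0) xs)"
      by (simp add: list_eq_iff_nth_eq)
    then show "\<exists>\<sigma>. xs = map of_bool \<sigma>" by blast
  qed auto
  also have "\<dots> \<longleftrightarrow> (\<exists>\<sigma>. a = list_encode (map of_bool \<sigma>))"
    using a by (metis list_encode_inverse)
  finally show ?thesis .
qed

lemma CB_iff:
  "CB F (list_encode (map of_bool \<sigma>)) (list_encode (map of_bool \<tau>)) \<longleftrightarrow>
     length \<sigma> \<le> length \<tau> \<and> (\<forall>i<length \<sigma>. (\<sigma> ! i \<longrightarrow> i \<in> F \<or> \<tau> ! i) \<and> (i \<in> F \<longrightarrow> \<sigma> ! i))"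
proof -
  have len: "length \<sigma> \<le> list_encode (map of_bool \<sigma>)" using length_le_enc[of "map of_bool \<sigma>"] by simp
  have pt1: "\<not> bad F k (ctlpow k (list_encode (map of_bool \<sigma>))) (ctlpow k (list_encode (map of_bool \<tau>)))
     \<longleftrightarrow> k < length \<tau> \<and> (\<sigma> ! k \<longrightarrow> k \<in> F \<or> \<tau> ! k) \<and> (k \<in> F \<longrightarrow> \<sigma> ! k)"
    if "k < length \<sigma>" for k
  proof (cases "k < length \<tau>")
    case True
    then show ?thesis using that ctlpow_ne0[of k "map of_bool \<sigma>"] ctlpow_ne0[of k "map of_bool \<tau>"]
      by (simp add: bad_def chd_ctlpow)
  next
    case False
    then show ?thesis using that ctlpow_ne0[of k "map of_bool \<sigma>"] ctlpow_ne0[of k "map of_bool \<tau>"]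
      by (simp add: bad_def)
  qed
  have pt2: "\<not> bad F k (ctlpow k (list_encode (map of_bool \<sigma>))) b" if "\<not> k < length \<sigma>" for k b
    using that ctlpow_ne0[of k "map of_bool \<sigma>"] by (simp add: bad_def)
  have "CB F (list_encode (map of_bool \<sigma>)) (list_encode (map of_bool \<tau>)) \<longleftrightarrow>
    (\<forall>k<length \<sigma>. k < length \<tau> \<and> (\<sigma> ! k \<longrightarrow> k \<in> F \<or> \<tau> ! k) \<and> (k \<in> F \<longrightarrow> \<sigma> ! k))"
    unfolding CB_def using len pt1 pt2 by (meson le_less_trans not_le)
  also have "\<dots> \<longleftrightarrow> length \<sigma> \<le> length \<tau> \<and> (\<forall>i<length \<sigma>. (\<sigma> ! i \<longrightarrow> i \<in> F \<or> \<tau> ! i) \<and> (i \<in> F \<longrightarrow> \<sigma> ! i))"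
    by (auto simp: not_le[symmetric] dest: order.strict_trans2)
  finally show ?thesis .
qed


definition theta_of :: "prfun \<Rightarrow> (bool list \<times> nat) set" where
  "theta_of f = {(\<sigma>, x). \<exists>y. pr_eval f [code_pair \<sigma> x, y] = 0}"

lemma map_of_bool_eq: "(map of_bool \<sigma> :: nat list) = map of_bool \<sigma>' \<longleftrightarrow> \<sigma> = \<sigma>'"
  by (simp add: inj_map_eq_map inj_def)

lemma code_pair_eq: "code_pair \<sigma> x = code_pair \<sigma>' x' \<longleftrightarrow> \<sigma> = \<sigma>' \<and> x = x'"
  by (simp add: code_pair_def list_encode_eq map_of_bool_eq)

lemma ce_operator_theta: "ce_operator \<Theta> \<Longrightarrow> \<exists>f. \<Theta> = theta_of f"
proof -
  assume "ce_operator \<Theta>"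
  then obtain f where f: "{code_pair \<sigma> x | \<sigma> x. (\<sigma>, x) \<in> \<Theta>} = {c. \<exists>y. pr_eval f [c, y] = 0}"
    unfolding ce_operator_def ce_def by blast
  have "(\<sigma>, x) \<in> \<Theta> \<longleftrightarrow> (\<sigma>, x) \<in> theta_of f" for \<sigma> x
  proof -
    have "(\<sigma>, x) \<in> \<Theta> \<longleftrightarrow> code_pair \<sigma> x \<in> {code_pair \<sigma> x | \<sigma> x. (\<sigma>, x) \<in> \<Theta>}"
      by (auto simp: code_pair_eq)
    then show ?thesis unfolding f theta_of_def by simp
  qed
  then show ?thesis by auto
qed

definition compat :: "nat set \<Rightarrow> nat set \<Rightarrow> bool list \<Rightarrow> bool" where
  "compat F S \<sigma> \<longleftrightarrow> (\<forall>i<length \<sigma>. (\<sigma> ! i \<longrightarrow> i \<in> F \<or> i \<in> S) \<and> (i \<in> F \<longrightarrow> \<sigma> ! i))"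

definition Phi :: "(bool list \<times> nat) set \<Rightarrow> nat set \<Rightarrow> nat set \<Rightarrow> nat set" where
  "Phi \<Theta> F S = {x. \<exists>\<sigma>. (\<sigma>, x) \<in> \<Theta> \<and> compat F S \<sigma>}"

lemma psi_exists:
  assumes F: "finite F"
  shows "\<exists>\<Psi>. ce_operator \<Psi> \<and> (\<forall>S. op_apply \<Psi> S = Phi (theta_of f) F S)"
proof -
  define \<Psi> where "\<Psi> = {(\<tau>, x). \<exists>\<sigma>. (\<sigma>, x) \<in> theta_of f \<and> length \<sigma> \<le> length \<tau> \<and>
      (\<forall>i<length \<sigma>. (\<sigma> ! i \<longrightarrow> i \<in> F \<or> \<tau> ! i) \<and> (i \<in> F \<longrightarrow> \<sigma> ! i))}"
  have app: "op_apply \<Psi> S = Phi (theta_of f) F S" for S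
  proof
    show "op_apply \<Psi> S \<subseteq> Phi (theta_of f) F S"
    proof
      fix x assume "x \<in> op_apply \<Psi> S"
      then obtain \<tau> \<sigma> where t: "init_seg \<tau> S" and s: "(\<sigma>, x) \<in> theta_of f" "length \<sigma> \<le> length \<tau>"
        "\<forall>i<length \<sigma>. (\<sigma> ! i \<longrightarrow> i \<in> F \<or> \<tau> ! i) \<and> (i \<in> F \<longrightarrow> \<sigma> ! i)"
        unfolding op_apply_def \<Psi>_def by blast
      have "\<tau> ! i = (i \<in> S)" if "i < length \<tau>" for i
        using t that unfolding init_seg_def by (metis add_0 diff_zero nth_map_upt)
      then have "compat F S \<sigma>" using s unfolding compat_def by auto
      then show "x \<in> Phi (theta_of f) F S" using s unfolding Phi_def by blast
    qed
  next
    show "Phi (theta_of f) F S \<subseteq> op_apply \<Psi> S"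
    proof
      fix x assume "x \<in> Phi (theta_of f) F S"
      then obtain \<sigma> where s: "(\<sigma>, x) \<in> theta_of f" "compat F S \<sigma>" unfolding Phi_def by blast
      define \<tau> where "\<tau> = map (\<lambda>i. i \<in> S) [0..<length \<sigma>]"
      have "init_seg \<tau> S" unfolding init_seg_def \<tau>_def by simp
      moreover have "(\<tau>, x) \<in> \<Psi>" using s unfolding \<Psi>_def \<tau>_def compat_def
        by (auto intro!: exI[of _ \<sigma>])
      ultimately show "x \<in> op_apply \<Psi> S" unfolding op_apply_def by blast
    qed
  qed
  define P where "P c w \<longleftrightarrow> V (dfst c) \<and> V (dfst w) \<and> pr_eval f [prod_encode (dfst w, dsnd c), dsnd w] = 0
      \<and> CB F (dfst w) (dfst c)" for c w
  have "prfn 2 (\<lambda>xs. of_bool (P (xs ! 0) (xs ! 1)))"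
    unfolding P_def by (rule prfn_intros prfn_V prfn_CB[OF F] | simp)+
  then have ceP: "ce {c. \<exists>w. P c w}" by (rule ce_intro)
  have "{code_pair \<tau> x | \<tau> x. (\<tau>, x) \<in> \<Psi>} = {c. \<exists>w. P c w}"
  proof
    show "{code_pair \<tau> x | \<tau> x. (\<tau>, x) \<in> \<Psi>} \<subseteq> {c. \<exists>w. P c w}"
    proof
      fix c assume "c \<in> {code_pair \<tau> x | \<tau> x. (\<tau>, x) \<in> \<Psi>}"
      then obtain \<tau> x \<sigma> y where c: "c = code_pair \<tau> x" and s: "pr_eval f [code_pair \<sigma> x, y] = 0"
        "length \<sigma> \<le> length \<tau>" "\<forall>i<length \<sigma>. (\<sigma> ! i \<longrightarrow> i \<in> F \<or> \<tau> ! i) \<and> (i \<in> F \<longrightarrow> \<sigma> ! i)"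
        unfolding \<Psi>_def theta_of_def by blast
      define w where "w = prod_encode (list_encode (map of_bool \<sigma>), y)"
      have "P c w" unfolding P_def
        using s by (simp add: c w_def dfst_eq dsnd_eq code_pair_def V_iff CB_iff) blast
      then show "c \<in> {c. \<exists>w. P c w}" by blast
    qed
  next
    show "{c. \<exists>w. P c w} \<subseteq> {code_pair \<tau> x | \<tau> x. (\<tau>, x) \<in> \<Psi>}"
    proof
      fix c assume "c \<in> {c. \<exists>w. P c w}"
      then obtain w where p: "P c w" by blast
      then obtain \<tau> \<sigma> where t: "dfst c = list_encode (map of_bool \<tau>)" and s: "dfst w = list_encode (map of_bool \<sigma>)"
        unfolding P_def V_iff by blast
      have c: "c = code_pair \<tau> (dsnd c)"
        unfolding code_pair_def using t by (metis prod_decode_alt prod_decode_inverse)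
      have "(\<tau>, dsnd c) \<in> \<Psi>"
        using p unfolding P_def \<Psi>_def theta_of_def using t s
        by (simp add: CB_iff code_pair_def) blast
      then show "c \<in> {code_pair \<tau> x | \<tau> x. (\<tau>, x) \<in> \<Psi>}" using c by blast
    qed
  qed
  then have "ce_operator \<Psi>" unfolding ce_operator_def using ceP by simp
  then show ?thesis using app by blast
qed


lemma infinite_above: "infinite (C::nat set) \<Longrightarrow> infinite {c\<in>C. m < c}"
proof
  assume inf: "infinite C" and fin: "finite {c\<in>C. m < c}"
  have "C \<subseteq> {c\<in>C. m < c} \<union> {..m}" by auto
  then have "finite C" using fin by (meson finite_UnI finite_atMost finite_subset)
  then show False using inf by simp
qed

lemma pick: "infinite (C::nat set) \<Longrightarrow> finite F \<Longrightarrow> \<exists>c\<in>C. c \<notin> F \<and> m \<le> c"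
proof -
  assume "infinite C" "finite F"
  then have "infinite ({c\<in>C. m < c} - F)" using infinite_above by auto
  then obtain c where "c \<in> {c\<in>C. m < c} - F" by (metis finite.emptyI ex_in_conv)
  then show ?thesis by auto
qed

definition stepP :: "nat set \<Rightarrow> nat set \<Rightarrow> prfun \<Rightarrow> nat set \<Rightarrow> nat set \<Rightarrow> nat set \<Rightarrow> nat set \<Rightarrow> bool" where
  "stepP A B f F C F' C' \<longleftrightarrow> finite F' \<and> F' \<subseteq> B \<and> C' \<subseteq> B \<and> infinite C' \<and> F \<subset> F' \<and> F' \<subseteq> F \<union> C \<and> C' \<subseteq> C
     \<and> (\<forall>G. F' \<subseteq> G \<and> G \<subseteq> F' \<union> C' \<longrightarrow> op_apply (theta_of f) G \<noteq> A)"

lemma step: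
  assumes NC: "\<forall>C. C \<subseteq> B \<and> infinite C \<longrightarrow> (\<forall>\<Psi>. ce_operator \<Psi> \<longrightarrow> (\<exists>S. S \<subseteq> C \<and> infinite S \<and> op_apply \<Psi> S \<noteq> A))"
    and F: "finite F" "F \<subseteq> B" and C: "C \<subseteq> B" "infinite C"
  shows "\<exists>F' C'. stepP A B f F C F' C'"
proof -
  let ?T = "theta_of f"
  obtain \<Psi> where psi: "ce_operator \<Psi>" "\<forall>S. op_apply \<Psi> S = Phi ?T F S"
    using psi_exists[OF F(1)] by blast
  show ?thesis
  proof (cases "\<exists>x. x \<notin> A \<and> x \<in> Phi ?T F C")
    case True
    then obtain x \<sigma> where x: "x \<notin> A" and s: "(\<sigma>, x) \<in> ?T" "compat F C \<sigma>"
      unfolding Phi_def by blast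
    obtain c0 where c0: "c0 \<in> C" "c0 \<notin> F" "length \<sigma> \<le> c0" using pick[OF C(2) F(1)] by blast
    define F' where "F' = F \<union> {i. i < length \<sigma> \<and> \<sigma> ! i} \<union> {c0}"
    define C' where "C' = {c\<in>C. c0 < c}"
    have cp: "\<forall>i<length \<sigma>. (\<sigma> ! i \<longrightarrow> i \<in> F \<or> i \<in> C) \<and> (i \<in> F \<longrightarrow> \<sigma> ! i)"
      using s(2) unfolding compat_def .
    have sub: "{i. i < length \<sigma> \<and> \<sigma> ! i} \<subseteq> F \<union> C" using cp by blast
    have fin: "finite F'" unfolding F'_def using F(1) by simp
    have FB: "F' \<subseteq> B" unfolding F'_def using sub F(2) C(1) c0(1) by blast
    have CB': "C' \<subseteq> B" unfolding C'_def using C(1) by blast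
    have Cinf: "infinite C'" unfolding C'_def using infinite_above[OF C(2)] .
    have FF: "F \<subset> F'" unfolding F'_def using c0(2) by blast
    have FC: "F' \<subseteq> F \<union> C" unfolding F'_def using sub c0(1) by blast
    have CC: "C' \<subseteq> C" unfolding C'_def by blast
    have neq: "op_apply ?T G \<noteq> A" if G: "F' \<subseteq> G" "G \<subseteq> F' \<union> C'" for G
    proof -
      have eqi: "\<sigma> ! i \<longleftrightarrow> i \<in> G" if i: "i < length \<sigma>" for i
      proof
        assume "\<sigma> ! i" then have "i \<in> F'" unfolding F'_def using i by blast
        then show "i \<in> G" using G(1) by blast
      next
        assume "i \<in> G"
        then have "i \<in> F' \<union> C'" using G(2) by blast
        then have "i \<in> F \<or> (i < length \<sigma> \<and> \<sigma> ! i) \<or> i = c0 \<or> (i \<in> C \<and> c0 < i)"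
          unfolding F'_def C'_def by blast
        then show "\<sigma> ! i"
        proof (elim disjE)
          assume "i \<in> F" then show ?thesis using cp i by blast
        next
          assume "i < length \<sigma> \<and> \<sigma> ! i" then show ?thesis by blast
        next
          assume "i = c0" then show ?thesis using i c0(3) by simp
        next
          assume "i \<in> C \<and> c0 < i" then show ?thesis using i c0(3) by simp
        qed
      qed
      have "init_seg \<sigma> G" unfolding init_seg_def
      proof (rule nth_equalityI)
        fix i assume "i < length \<sigma>"
        then show "\<sigma> ! i = map (\<lambda>i. i \<in> G) [0..<length \<sigma>] ! i" using eqi[of i] by simp
      qed simp
      then have "x \<in> op_apply ?T G" using s(1) unfolding op_apply_def by blast
      then show ?thesis using x by blast
    qed
    have "stepP A B f F C F' C'" unfolding stepP_def using fin FB CB' Cinf FF FC CC neq by blast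
    then show ?thesis by blast
  next
    case False
    then have sub: "Phi ?T F C \<subseteq> A" by (meson subsetI)
    have "\<exists>S. S \<subseteq> C \<and> infinite S \<and> op_apply \<Psi> S \<noteq> A"
      using NC[THEN spec[of _ C]] C psi(1) by simp
    then obtain S where S: "S \<subseteq> C" "infinite S" "op_apply \<Psi> S \<noteq> A" by blast
    have "Phi ?T F S \<subseteq> Phi ?T F C" using S(1) unfolding Phi_def compat_def by blast
    then have PA: "Phi ?T F S \<subseteq> A" using sub by (rule order.trans)
    have "Phi ?T F S \<noteq> A" using S(3) psi(2) by simp
    then have "\<not> A \<subseteq> Phi ?T F S" using PA by (metis subset_antisym)
    then obtain x where x: "x \<in> A" "x \<notin> Phi ?T F S" by (meson subsetI)
    obtain c0 where c0: "c0 \<in> S" "c0 \<notin> F" using pick[OF S(2) F(1)] by blast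
    define F' where "F' = F \<union> {c0}"
    define C' where "C' = {c\<in>S. c0 < c}"
    have fin: "finite F'" unfolding F'_def using F(1) by simp
    have FB: "F' \<subseteq> B" unfolding F'_def using F(2) C(1) c0(1) S(1) by blast
    have CB': "C' \<subseteq> B" unfolding C'_def using C(1) S(1) by blast
    have Cinf: "infinite C'" unfolding C'_def using infinite_above[OF S(2)] .
    have FF: "F \<subset> F'" unfolding F'_def using c0(2) by blast
    have FC: "F' \<subseteq> F \<union> C" unfolding F'_def using c0(1) S(1) by blast
    have CC: "C' \<subseteq> C" unfolding C'_def using S(1) by blast
    have neq: "op_apply ?T G \<noteq> A" if G: "F' \<subseteq> G" "G \<subseteq> F' \<union> C'" for G
    proof
      assume "op_apply ?T G = A"
      then obtain \<sigma> where s: "(\<sigma>, x) \<in> ?T" "init_seg \<sigma> G" using x(1) unfolding op_apply_def by blast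
      have eqi: "\<sigma> ! i \<longleftrightarrow> i \<in> G" if "i < length \<sigma>" for i
        using s(2) that unfolding init_seg_def by (metis add_0 diff_zero nth_map_upt)
      have GS: "G \<subseteq> F \<union> S" using G(2) c0(1) unfolding F'_def C'_def by blast
      have FG: "F \<subseteq> G" using G(1) unfolding F'_def by blast
      have "compat F S \<sigma>" unfolding compat_def
      proof (intro allI impI conjI)
        fix i assume i: "i < length \<sigma>"
        show "\<sigma> ! i \<Longrightarrow> i \<in> F \<or> i \<in> S" using eqi[OF i] GS by blast
        show "i \<in> F \<Longrightarrow> \<sigma> ! i" using eqi[OF i] FG by blast
      qed
      then have "x \<in> Phi ?T F S" using s(1) unfolding Phi_def by blast
      then show False using x(2) by blast
    qed
    have "stepP A B f F C F' C'" unfolding stepP_def using fin FB CB' Cinf FF FC CC neq by blast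
    then show ?thesis by blast
  qed
qed


lemma stepP_D:
  assumes "stepP A B f F C F' C'"
  shows "finite F'" "F' \<subseteq> B" "C' \<subseteq> B" "infinite C'" "F \<subset> F'" "F' \<subseteq> F \<union> C" "C' \<subseteq> C"
    "F' \<subseteq> G \<Longrightarrow> G \<subseteq> F' \<union> C' \<Longrightarrow> op_apply (theta_of f) G \<noteq> A"
  using assms unfolding stepP_def by simp_all


theorem proposition3p7:
  fixes A B :: "nat set"
  assumes "infinite B"
    and "\<forall>S. S \<subseteq> B \<and> infinite S \<longrightarrow> ce_in A S"
  shows "\<exists>C. C \<subseteq> B \<and> infinite C \<and>
           (\<exists>\<Theta>. ce_operator \<Theta> \<and> (\<forall>S. S \<subseteq> C \<and> infinite S \<longrightarrow> op_apply \<Theta> S = A))"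
proof (rule ccontr)
  assume na: "\<not> ?thesis"
  have NC: "\<forall>C. C \<subseteq> B \<and> infinite C \<longrightarrow> (\<forall>\<Psi>. ce_operator \<Psi> \<longrightarrow> (\<exists>S. S \<subseteq> C \<and> infinite S \<and> op_apply \<Psi> S \<noteq> A))"
  proof (intro allI impI)
    fix C \<Psi> assume "C \<subseteq> B \<and> infinite C" "ce_operator \<Psi>"
    show "\<exists>S. S \<subseteq> C \<and> infinite S \<and> op_apply \<Psi> S \<noteq> A"
    proof (rule ccontr)
      assume "\<not> (\<exists>S. S \<subseteq> C \<and> infinite S \<and> op_apply \<Psi> S \<noteq> A)"
      then have "\<forall>S. S \<subseteq> C \<and> infinite S \<longrightarrow> op_apply \<Psi> S = A" by blast
      then show False using na \<open>C \<subseteq> B \<and> infinite C\<close> \<open>ce_operator \<Psi>\<close> by blast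
    qed
  qed
  define nxt where "nxt p e = (SOME q. stepP A B (from_nat e) (fst p) (snd p) (fst q) (snd q))"
    for p :: "nat set \<times> nat set" and e :: nat
  define seq where "seq n = rec_nat ({}, B) (\<lambda>e p. nxt p e) n" for n
  have seq0: "seq 0 = ({}, B)" by (simp add: seq_def)
  have seqS: "seq (Suc n) = nxt (seq n) n" for n by (simp add: seq_def)
  define good where "good p \<longleftrightarrow> finite (fst p) \<and> fst p \<subseteq> B \<and> snd p \<subseteq> B \<and> infinite (snd p)"
    for p :: "nat set \<times> nat set"
  have sp: "stepP A B (from_nat e) (fst p) (snd p) (fst (nxt p e)) (snd (nxt p e))" if gp: "good p" for p e
  proof -
    obtain F' C' where "stepP A B (from_nat e) (fst p) (snd p) F' C'"
      using step[OF NC, of "fst p" "snd p" "from_nat e"] gp unfolding good_def by blast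
    then have "\<exists>q. stepP A B (from_nat e) (fst p) (snd p) (fst q) (snd q)" by (intro exI[of _ "(F', C')"]) simp
    then show ?thesis unfolding nxt_def by (rule someI_ex)
  qed
  have gd: "good (seq n)" for n
  proof (induction n)
    case 0
    then show ?case using assms(1) by (simp add: seq0 good_def)
  next
    case (Suc n)
    note d = stepP_D[OF sp[OF Suc, of n]]
    show ?case unfolding seqS good_def using d(1-4) by blast
  qed
  define Fs where "Fs n = fst (seq n)" for n
  define Cs where "Cs n = snd (seq n)" for n
  have st: "stepP A B (from_nat n) (Fs n) (Cs n) (Fs (Suc n)) (Cs (Suc n))" for n
    using sp[OF gd[of n], of n] unfolding Fs_def Cs_def seqS .
  have mono: "Fs m \<subseteq> Fs n \<and> Cs n \<subseteq> Cs m \<and> Fs n \<subseteq> Fs m \<union> Cs m" if "m \<le> n" for m n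
    using that
  proof (induction n rule: dec_induct)
    case base
    then show ?case by blast
  next
    case (step n)
    have "Fs n \<subset> Fs (Suc n)" "Fs (Suc n) \<subseteq> Fs n \<union> Cs n" "Cs (Suc n) \<subseteq> Cs n"
      using stepP_D[OF st[of n]] by blast+
    then show ?case using step.IH by blast
  qed
  define G where "G = (\<Union>n. Fs n)"
  have GB: "G \<subseteq> B" using gd unfolding G_def Fs_def good_def by blast
  have card: "n \<le> card (Fs n)" for n
  proof (induction n)
    case (Suc n)
    have "Fs n \<subset> Fs (Suc n)" "finite (Fs (Suc n))"
      using stepP_D[OF st[of n]] by blast+
    then have "card (Fs n) < card (Fs (Suc n))" by (rule psubset_card_mono[rotated])
    then show ?case using Suc by simp
  qed simp
  have Ginf: "infinite G"
  proof
    assume fin: "finite G"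
    have "Fs (Suc (card G)) \<subseteq> G" unfolding G_def by blast
    then have "card (Fs (Suc (card G))) \<le> card G" using fin by (rule card_mono[rotated])
    then show False using card[of "Suc (card G)"] by simp
  qed
  have cone: "Fs n \<subseteq> G \<and> G \<subseteq> Fs n \<union> Cs n" for n
  proof
    show "Fs n \<subseteq> G" unfolding G_def by blast
    show "G \<subseteq> Fs n \<union> Cs n"
    proof
      fix g assume "g \<in> G"
      then obtain m where g: "g \<in> Fs m" unfolding G_def by blast
      show "g \<in> Fs n \<union> Cs n"
      proof (cases "m \<le> n")
        case True
        then show ?thesis using mono[OF True] g by blast
      next
        case False
        then have "n \<le> m" by simp
        then show ?thesis using mono[of n m] g by blast
      qed
    qed
  qed
  obtain \<Theta> where th: "ce_operator \<Theta>" "op_apply \<Theta> G = A"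
    using assms(2) GB Ginf unfolding ce_in_def by blast
  obtain f where f: "\<Theta> = theta_of f" using ce_operator_theta[OF th(1)] by blast
  have "op_apply (theta_of (from_nat (to_nat f))) G \<noteq> A"
    using stepP_D(8)[OF st[of "to_nat f"]] cone[of "Suc (to_nat f)"] by blast
  then show False using th(2) f by simp
qed

end
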